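(* There is a $17$-point code in $\mathrm{SO}(4)$ which is a regular simplex (all pairwise chordal distances between distinct points equal), is universally optimal, and has a symmetry group acting transitively on it. Moreover, there is no regular simplex in $\mathrm{SO}(4)$ with more than $17$ points.
   Context: $\mathrm{SO}(n)$ carries the chordal distance $d_c(U_1,U_2)=\|U_1-U_2\|_F$ (Frobenius norm), coming from the embedding $\mathrm{SO}(n)\subset\mathbb{R}^{n\times n}$. A code is a finite subset; a regular simplex is a code whose distinct points are pairwise equidistant. A function $g:(0,\infty)\to\mathbb{R}$ is completely monotonic if it is smooth and $(-1)^k g^{(k)}\ge 0$ for all $k\ge0$. A code $\mathcal{C}\subset \mathrm{SO}(n)$ is universally optimal if for every completely monotonic $g$ it minimizes the energy $\sum_{x\ne y\in\mathcal{C}} g(d_c(x,y)^2)$ among all codes in $\mathrm{SO}(n)$ of the same size. A symmetry of the code is an isometry of $\mathrm{SO}(4)$ (for $d_c$) mapping the code to itself. *)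

theory Defs
  imports "HOL-Analysis.Analysis"
begin

definition SO4 :: "(real^4^4) set" where
  "SO4 = {U. transpose U ** U = mat 1 \<and> det U = 1}"

definition chordal_dist :: "real^4^4 \<Rightarrow> real^4^4 \<Rightarrow> real" where
  "chordal_dist U V = sqrt (\<Sum>i\<in>UNIV. \<Sum>j\<in>UNIV. (U$i$j - V$i$j)^2)"

definition is_code :: "(real^4^4) set \<Rightarrow> bool" where
  "is_code C \<longleftrightarrow> finite C \<and> C \<subseteq> SO4"

definition regular_simplex :: "(real^4^4) set \<Rightarrow> bool" where
  "regular_simplex C \<longleftrightarrow> is_code C \<and>
     (\<exists>r. \<forall>x\<in>C. \<forall>y\<in>C. x \<noteq> y \<longrightarrow> chordal_dist x y = r)"

definition completely_monotonic :: "(real \<Rightarrow> real) \<Rightarrow> bool" where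
  "completely_monotonic g \<longleftrightarrow>
     (\<forall>k. \<forall>x>0. ((deriv ^^ k) g) differentiable (at x)) \<and>
     (\<forall>k. \<forall>x>0. (-1)^k * (deriv ^^ k) g x \<ge> 0)"

definition energy :: "(real \<Rightarrow> real) \<Rightarrow> (real^4^4) set \<Rightarrow> real" where
  "energy g C = (\<Sum>(x,y)\<in>{(x,y). x \<in> C \<and> y \<in> C \<and> x \<noteq> y}. g ((chordal_dist x y)^2))"

definition universally_optimal :: "(real^4^4) set \<Rightarrow> bool" where
  "universally_optimal C \<longleftrightarrow> is_code C \<and>
     (\<forall>g. completely_monotonic g \<longrightarrow>
        (\<forall>D. is_code D \<and> card D = card C \<longrightarrow> energy g C \<le> energy g D))"

definition SO4_isometry :: "(real^4^4 \<Rightarrow> real^4^4) \<Rightarrow> bool" where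
  "SO4_isometry f \<longleftrightarrow> bij_betw f SO4 SO4 \<and>
     (\<forall>x\<in>SO4. \<forall>y\<in>SO4. chordal_dist (f x) (f y) = chordal_dist x y)"

definition code_symmetry :: "(real^4^4) set \<Rightarrow> (real^4^4 \<Rightarrow> real^4^4) \<Rightarrow> bool" where
  "code_symmetry C f \<longleftrightarrow> SO4_isometry f \<and> f ` C = C"

definition symmetry_transitive :: "(real^4^4) set \<Rightarrow> bool" where
  "symmetry_transitive C \<longleftrightarrow> (\<forall>x\<in>C. \<forall>y\<in>C. \<exists>f. code_symmetry C f \<and> f x = y)"

end

theory Submission
  imports Defs
begin



lemma normsq: "(norm (X::real^'n^'m))^2 = (\<Sum>i\<in>UNIV. \<Sum>j\<in>UNIV. (X$i$j)^2)"
  unfolding power2_norm_eq_inner inner_vec_def inner_real_def by (simp add: power2_eq_square)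

lemma chordal_norm: "chordal_dist U V = norm (U - V)"
proof -
  have "chordal_dist U V = sqrt ((norm (U - V))^2)"
    unfolding chordal_dist_def normsq by simp
  then show ?thesis by simp
qed

lemma SO4_orth: "U \<in> SO4 \<longleftrightarrow> orthogonal_matrix U \<and> det U = 1"
  by (simp add: SO4_def orthogonal_matrix)

lemma SO4_norm: assumes "U \<in> SO4" shows "norm U = 2"
proof -
  have tu: "transpose U ** U = mat 1" using assms by (simp add: SO4_def)
  have col: "(\<Sum>i\<in>UNIV. (U$i$j)^2) = 1" for j
  proof -
    have "(transpose U ** U)$j$j = 1" using tu by (simp add: mat_def)
    then show ?thesis by (simp add: matrix_matrix_mult_def transpose_def power2_eq_square)
  qed
  have "(norm U)^2 = (\<Sum>j\<in>(UNIV::4 set). \<Sum>i\<in>UNIV. (U$i$j)^2)"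
    unfolding normsq by (rule sum.swap)
  also have "\<dots> = 4" by (simp add: col)
  finally have "(norm U)^2 = 2^2" by simp
  then show ?thesis using power2_eq_iff_nonneg[of "norm U" 2] by simp
qed

lemma norm_transpose: "norm (transpose (X::real^'n^'m)) = norm X"
proof -
  have "(norm (transpose X))^2 = (norm X)^2"
    unfolding normsq transpose_def by (simp, rule sum.swap)
  then show ?thesis using power2_eq_iff_nonneg[of "norm (transpose X)" "norm X"] by simp
qed

lemma norm_mul_orth_right:
  assumes "orthogonal_matrix (Q::real^'n^'n)"
  shows "norm ((X::real^'n^'m) ** Q) = norm X"
proof -
  have ot: "orthogonal_transformation (\<lambda>x. transpose Q *v x)"
    unfolding orthogonal_transformation_matrix matrix_of_matrix_vector_mul
    using matrix_vector_mul_linear assms orthogonal_matrix_transpose by blast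
  have row: "(X ** Q)$i = transpose Q *v (X$i)" for i
    by (simp add: vec_eq_iff matrix_matrix_mult_def matrix_vector_mult_def transpose_def mult.commute)
  have "norm ((X ** Q)$i) = norm (X$i)" for i
    unfolding row using ot orthogonal_transformation_norm by blast
  then show ?thesis by (simp add: norm_vec_def)
qed

lemma norm_mul_orth_left:
  assumes "orthogonal_matrix (P::real^'m^'m)"
  shows "norm (P ** (X::real^'n^'m)) = norm X"
proof -
  have "norm (P ** X) = norm (transpose (P ** X))" by (simp add: norm_transpose)
  also have "\<dots> = norm (transpose X ** transpose P)" by (simp add: matrix_transpose_mul)
  also have "\<dots> = norm (transpose X)" using assms by (simp add: norm_mul_orth_right)
  finally show ?thesis by (simp add: norm_transpose)
qed



lemma inner_from_norms:
  fixes x y :: "'a::real_inner"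
  shows "inner x y = ((norm x)^2 + (norm y)^2 - (norm (x - y))^2) / 2"
  by (simp add: power2_norm_eq_inner inner_diff_left inner_diff_right inner_commute)

lemma simplex_bound:
  assumes "regular_simplex C" shows "card C \<le> 17"
proof (cases "card C \<le> 1")
  case True then show ?thesis by simp
next
  case False
  from assms obtain r where fin: "finite C" and
    r: "\<And>x y. x\<in>C \<Longrightarrow> y\<in>C \<Longrightarrow> x \<noteq> y \<Longrightarrow> norm (x - y) = r"
    by (auto simp: regular_simplex_def is_code_def chordal_norm)
  from False have "C \<noteq> {}" by auto
  then obtain a where aC: "a \<in> C" by auto
  from False have "card (C - {a}) \<noteq> 0" using aC fin by simp
  then obtain b where bC: "b \<in> C" and ba: "b \<noteq> a" by (metis Diff_iff card.empty ex_in_conv singletonI)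
  have rpos: "r > 0" using r[OF bC aC ba] ba by auto
  define A where "A = (\<lambda>x. x - a) ` (C - {a})"
  have finA: "finite A" unfolding A_def using fin by simp
  have ip: "inner x y = (r^2/2) * (1 + (if x = y then 1 else 0))" if "x \<in> A" "y \<in> A" for x y
  proof -
    obtain u where u: "u \<in> C" "u \<noteq> a" "x = u - a" using \<open>x\<in>A\<close> unfolding A_def by auto
    obtain v where v: "v \<in> C" "v \<noteq> a" "y = v - a" using \<open>y\<in>A\<close> unfolding A_def by auto
    have nx: "norm x = r" using r[OF u(1) aC u(2)] u(3) by simp
    have ny: "norm y = r" using r[OF v(1) aC v(2)] v(3) by simp
    show ?thesis
    proof (cases "x = y")
      case True then show ?thesis using nx by (simp add: power2_norm_eq_inner[symmetric])
    next
      case False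
      then have "u \<noteq> v" using u v by auto
      then have "norm (x - y) = r" using r[OF u(1) v(1)] u(3) v(3) by simp
      then show ?thesis using False nx ny by (simp add: inner_from_norms)
    qed
  qed
  have indep: "independent A"
  proof (rule independent_if_scalars_zero[OF finA])
    fix f x assume s: "(\<Sum>x\<in>A. f x *\<^sub>R x) = 0" and xA: "x \<in> A"
    have "0 = inner (\<Sum>x\<in>A. f x *\<^sub>R x) (\<Sum>y\<in>A. f y *\<^sub>R y)" using s by simp
    also have "\<dots> = (\<Sum>x\<in>A. \<Sum>y\<in>A. f x * f y * inner y x)"
      by (simp add: inner_sum_left inner_sum_right sum_distrib_left mult.assoc)
    also have "\<dots> = (\<Sum>x\<in>A. \<Sum>y\<in>A. (r^2/2) * (f x * f y + (if x = y then f x * f y else 0)))"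
      by (intro sum.cong refl) (simp add: ip algebra_simps)
    also have "\<dots> = (r^2/2) * ((\<Sum>x\<in>A. \<Sum>y\<in>A. f x * f y) + (\<Sum>x\<in>A. \<Sum>y\<in>A. if x = y then f x * f y else 0))"
      by (simp add: sum_distrib_left sum.distrib distrib_left)
    also have "(\<Sum>x\<in>A. \<Sum>y\<in>A. if x = y then f x * f y else 0) = (\<Sum>x\<in>A. (f x)^2)"
      using finA by (simp add: power2_eq_square)
    also have "(\<Sum>x\<in>A. \<Sum>y\<in>A. f x * f y) = (\<Sum>x\<in>A. f x)^2"
      by (simp add: power2_eq_square sum_product)
    finally have "(\<Sum>x\<in>A. f x)^2 + (\<Sum>x\<in>A. (f x)^2) = 0" using rpos by simp
    moreover have "(\<Sum>x\<in>A. (f x)^2) \<ge> (f x)^2"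
      using finA xA by (intro member_le_sum) auto
    ultimately show "f x = 0"
      by (smt (verit) zero_le_power2 power2_less_eq_zero_iff)
  qed
  have "card A \<le> 16" using independent_bound[OF indep] by simp
  moreover have "card A = card (C - {a})" unfolding A_def by (rule card_image) (simp add: inj_on_def)
  ultimately show ?thesis using aC fin by simp
qed


lemma cm_facts:
  assumes "completely_monotonic g"
  shows "\<And>x. x > 0 \<Longrightarrow> DERIV g x :> deriv g x"
    and "\<And>x. x > 0 \<Longrightarrow> DERIV (deriv g) x :> deriv (deriv g) x"
    and "\<And>x. x > 0 \<Longrightarrow> deriv g x \<le> 0"
    and "\<And>x. x > 0 \<Longrightarrow> deriv (deriv g) x \<ge> 0"
proof -
  fix x :: real assume x: "x > 0"
  from assms have d: "\<And>k. ((deriv ^^ k) g) differentiable (at x)"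
    and s: "\<And>k. (-1)^k * (deriv ^^ k) g x \<ge> 0"
    using x unfolding completely_monotonic_def by auto
  show "DERIV g x :> deriv g x" using d[of 0] by (simp add: DERIV_deriv_iff_real_differentiable)
  show "DERIV (deriv g) x :> deriv (deriv g) x" using d[of 1] by (simp add: DERIV_deriv_iff_real_differentiable)
  show "deriv g x \<le> 0" using s[of 1] by simp
  show "deriv (deriv g) x \<ge> 0" using s[of 2] by (simp add: numeral_2_eq_2)
qed

lemma cm_deriv_mono:
  assumes "completely_monotonic g" "0 < x" "x < y"
  shows "deriv g x \<le> deriv g y"
proof -
  obtain z where z: "x < z" "z < y" "deriv g y - deriv g x = (y - x) * deriv (deriv g) z"
    using MVT2[OF assms(3), of "deriv g" "deriv (deriv g)"] cm_facts(2)[OF assms(1)] assms(2) by force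
  have "deriv (deriv g) z \<ge> 0" using cm_facts(4)[OF assms(1)] z assms(2) by simp
  then show ?thesis using z assms by (smt (verit) mult_nonneg_nonneg)
qed

lemma cm_tangent:
  assumes "completely_monotonic g" "0 < t" "0 < t0"
  shows "g t \<ge> g t0 + deriv g t0 * (t - t0)"
proof (cases t t0 rule: linorder_cases)
  case less
  obtain z where z: "t < z" "z < t0" "g t0 - g t = (t0 - t) * deriv g z"
    using MVT2[OF less, of g "deriv g"] cm_facts(1)[OF assms(1)] assms(2) by force
  have "deriv g z \<le> deriv g t0" using cm_deriv_mono[OF assms(1), of z t0] z assms by simp
  then have "(t0 - t) * deriv g z \<le> (t0 - t) * deriv g t0" using less by (simp add: mult_left_mono)
  then show ?thesis using z by (simp add: algebra_simps)
next
  case equal then show ?thesis by simp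
next
  case greater
  obtain z where z: "t0 < z" "z < t" "g t - g t0 = (t - t0) * deriv g z"
    using MVT2[OF greater, of g "deriv g"] cm_facts(1)[OF assms(1)] assms(3) by force
  have "deriv g t0 \<le> deriv g z" using cm_deriv_mono[OF assms(1), of t0 z] z assms by simp
  then have "(t - t0) * deriv g t0 \<le> (t - t0) * deriv g z" using greater by (simp add: mult_left_mono)
  then show ?thesis using z by (simp add: algebra_simps)
qed

definition offd :: "'a set \<Rightarrow> ('a \<times> 'a) set" where
  "offd D = {(x,y). x \<in> D \<and> y \<in> D \<and> x \<noteq> y}"

lemma card_offd:
  assumes "finite D" shows "card (offd D) = card D * card D - card D"
proof -
  have e: "offd D = D \<times> D - (\<lambda>x. (x,x)) ` D" unfolding offd_def by auto
  have "card ((\<lambda>x. (x,x)) ` D) = card D" by (rule card_image) (simp add: inj_on_def)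
  then show ?thesis unfolding e using assms
    by (subst card_Diff_subset) (auto simp: card_cartesian_product)
qed

lemma sum_offd:
  assumes "finite D" "\<And>x. x \<in> D \<Longrightarrow> h x x = 0"
  shows "(\<Sum>(x,y)\<in>offd D. h x y) = (\<Sum>x\<in>D. \<Sum>y\<in>D. h x y)"
proof -
  have "(\<Sum>(x,y)\<in>offd D. h x y) = (\<Sum>(x,y)\<in>D \<times> D. h x y)"
    by (rule sum.mono_neutral_left) (auto simp: offd_def assms)
  also have "\<dots> = (\<Sum>x\<in>D. \<Sum>y\<in>D. h x y)" by (simp add: sum.cartesian_product)
  finally show ?thesis .
qed

lemma energy_offd: "energy g C = (\<Sum>(x,y)\<in>offd C. g ((norm (x - y))^2))"
  unfolding energy_def offd_def chordal_norm ..

lemma sumsq_bound: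
  assumes "is_code D" "card D = 17"
  shows "(\<Sum>(x,y)\<in>offd D. (norm (x - y))^2) \<le> 2312"
proof -
  have fin: "finite D" and sub: "D \<subseteq> SO4" using assms by (auto simp: is_code_def)
  have n: "\<And>x. x \<in> D \<Longrightarrow> (norm x)^2 = 4" using sub SO4_norm by auto
  have "(\<Sum>(x,y)\<in>offd D. (norm (x - y))^2) = (\<Sum>x\<in>D. \<Sum>y\<in>D. (norm (x - y))^2)"
    using fin by (rule sum_offd) simp
  also have "\<dots> = (\<Sum>x\<in>D. \<Sum>y\<in>D. 8 - 2 * inner x y)"
  proof (intro sum.cong refl)
    fix x y assume xy: "x \<in> D" "y \<in> D"
    have "inner x y = (4 + 4 - (norm (x - y))^2) / 2" using inner_from_norms[of x y] n[OF xy(1)] n[OF xy(2)] by simp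
    then show "(norm (x - y))^2 = 8 - 2 * inner x y" by simp
  qed
  also have "\<dots> = 8 * 17 * 17 - 2 * inner (\<Sum>x\<in>D. x) (\<Sum>y\<in>D. y)"
    using assms(2) by (simp add: sum_subtractf sum_distrib_left[symmetric] inner_sum_left inner_sum_right) (rule sum.swap)
  also have "\<dots> \<le> 2312" by simp
  finally show ?thesis .
qed

lemma energy_lower:
  assumes "completely_monotonic g" "is_code D" "card D = 17"
  shows "energy g D \<ge> 272 * g (17/2)"
proof -
  have fin: "finite D" using assms by (auto simp: is_code_def)
  have co: "card (offd D) = 272" using card_offd[OF fin] assms(3) by simp
  let ?t0 = "17/2::real"
  have "energy g D \<ge> (\<Sum>(x,y)\<in>offd D. g ?t0 + deriv g ?t0 * ((norm (x - y))^2 - ?t0))"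
    unfolding energy_offd
  proof (rule sum_mono)
    fix p assume "p \<in> offd D"
    then obtain x y where p: "p = (x,y)" "x \<noteq> y" unfolding offd_def by auto
    then have "(norm (x - y))^2 > 0" by simp
    then show "(case p of (x, y) \<Rightarrow> g ?t0 + deriv g ?t0 * ((norm (x - y))\<^sup>2 - ?t0))
               \<le> (case p of (x, y) \<Rightarrow> g ((norm (x - y))\<^sup>2))"
      using cm_tangent[OF assms(1), of "(norm (x - y))^2" ?t0] p by simp
  qed
  also have "(\<Sum>(x,y)\<in>offd D. g ?t0 + deriv g ?t0 * ((norm (x - y))^2 - ?t0))
      = 272 * g ?t0 + deriv g ?t0 * ((\<Sum>(x,y)\<in>offd D. (norm (x - y))^2) - 272 * ?t0)"
    using co by (simp add: sum.distrib sum_distrib_left case_prod_beta sum_subtractf algebra_simps)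
  finally have e: "energy g D \<ge> 272 * g ?t0 + deriv g ?t0 * ((\<Sum>(x,y)\<in>offd D. (norm (x - y))^2) - 272 * ?t0)" .
  have "deriv g ?t0 \<le> 0" using cm_facts(3)[OF assms(1)] by simp
  moreover have "(\<Sum>(x,y)\<in>offd D. (norm (x - y))^2) - 272 * ?t0 \<le> 0" using sumsq_bound[OF assms(2,3)] by simp
  ultimately have "deriv g ?t0 * ((\<Sum>(x,y)\<in>offd D. (norm (x - y))^2) - 272 * ?t0) \<ge> 0"
    by (simp add: mult_nonpos_nonpos)
  then show ?thesis using e by simp
qed



lemma tele: "2 * sin (x/2) * (\<Sum>r\<le>n. cos (real r * x)) = sin ((real n + 1/2) * x) + sin (x/2)"
proof (induction n)
  case 0 then show ?case by simp
next
  case (Suc n)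
  have e: "2 * sin (x/2) * cos (real (Suc n) * x) = sin ((real (Suc n) + 1/2) * x) - sin ((real n + 1/2) * x)"
  proof -
    have a1: "(real (Suc n) + 1/2) * x = real (Suc n) * x + x/2" by (simp add: algebra_simps)
    have a2: "(real n + 1/2) * x = real (Suc n) * x - x/2" by (simp add: algebra_simps)
    show ?thesis unfolding a1 a2 by (simp add: sin_add sin_diff)
  qed
  show ?case using Suc e by (simp add: distrib_left)
qed

lemma key_trig:
  fixes m :: int assumes "\<not> 17 dvd m"
  shows "(cos (5 * (of_int m * pi / 17)) + cos (15 * (of_int m * pi / 17))) *
         (cos (3 * (of_int m * pi / 17)) + cos (9 * (of_int m * pi / 17))) = -1/4"
proof -
  define y where "y = of_int m * pi / 17"
  have y17: "17 * (2 * y) = (2 * pi) * of_int m" by (simp add: y_def)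
  have per: "cos ((17 - r) * (2*y)) = cos (r * (2*y))" for r
  proof -
    have "(17 - r) * (2*y) = (2 * pi) * of_int m - r * (2*y)" using y17 by (simp add: algebra_simps)
    then show ?thesis by (simp add: cos_diff)
  qed
  have sy: "sin y \<noteq> 0"
  proof
    assume "sin y = 0"
    then obtain i :: int where "y = of_int i * pi" by (auto simp: sin_zero_iff_int2)
    then have "of_int m = (17 * of_int i :: real)" by (simp add: y_def field_simps)
    then have "m = 17 * i" by linarith
    then show False using assms by simp
  qed
  have "2 * sin y * (\<Sum>r\<le>16. cos (real r * (2*y))) = sin ((16 + 1/2) * (2*y)) + sin y"
    using tele[of "2*y" 16] by simp
  also have "sin ((16 + 1/2) * (2*y)) = - sin y"
  proof -
    have "(16 + 1/2) * (2*y) = (2 * pi) * of_int m - y" using y17 by (simp add: algebra_simps)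
    then show ?thesis by (simp only: sin_diff sin_int_2pin cos_int_2pin)
  qed
  finally have "(\<Sum>r\<le>16. cos (real r * (2*y))) = 0" using sy by simp
  then have s0: "1 + cos (2*y) + cos (4*y) + cos (6*y) + cos (8*y) + cos (10*y) + cos (12*y)
    + cos (14*y) + cos (16*y) + cos (18*y) + cos (20*y) + cos (22*y) + cos (24*y)
    + cos (26*y) + cos (28*y) + cos (30*y) + cos (32*y) = 0"
    by (simp add: atMost_nat_numeral algebra_simps)
  have p: "cos (34*y - t) = cos t" for t
  proof -
    have "34*y = (2 * pi) * of_int m" using y17 by simp
    then show ?thesis by (simp only: cos_diff sin_int_2pin cos_int_2pin)
  qed
  have r1: "cos (32*y) = cos (2*y)" using p[of "2*y"] by simp
  have r2: "cos (30*y) = cos (4*y)" using p[of "4*y"] by simp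
  have r3: "cos (28*y) = cos (6*y)" using p[of "6*y"] by simp
  have r4: "cos (26*y) = cos (8*y)" using p[of "8*y"] by simp
  have r5: "cos (24*y) = cos (10*y)" using p[of "10*y"] by simp
  have r6: "cos (22*y) = cos (12*y)" using p[of "12*y"] by simp
  have r7: "cos (20*y) = cos (14*y)" using p[of "14*y"] by simp
  have r8: "cos (18*y) = cos (16*y)" using p[of "16*y"] by simp
  have c1: "cos (5*y) * cos (3*y) = (cos (2*y) + cos (8*y)) / 2"
    using cos_times_cos[of "5*y" "3*y"] by simp
  have c2: "cos (5*y) * cos (9*y) = (cos (4*y) + cos (14*y)) / 2"
    using cos_times_cos[of "9*y" "5*y"] by (simp add: mult.commute)
  have c3: "cos (15*y) * cos (3*y) = (cos (12*y) + cos (18*y)) / 2"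
    using cos_times_cos[of "15*y" "3*y"] by simp
  have c4: "cos (15*y) * cos (9*y) = (cos (6*y) + cos (24*y)) / 2"
    using cos_times_cos[of "15*y" "9*y"] by simp
  have "(cos (5*y) + cos (15*y)) * (cos (3*y) + cos (9*y)) =
     cos (5*y) * cos (3*y) + cos (5*y) * cos (9*y) + cos (15*y) * cos (3*y) + cos (15*y) * cos (9*y)"
    by (simp add: algebra_simps)
  also have "\<dots> = -1/4" unfolding c1 c2 c3 c4 using s0 r1 r2 r3 r4 r5 r6 r7 r8 by argo
  finally show ?thesis unfolding y_def .
qed



lemma det_4:
  "det (A::'a::comm_ring_1^4^4) =
   A$1$1*A$2$2*A$3$3*A$4$4 - A$1$1*A$2$2*A$3$4*A$4$3 - A$1$1*A$2$3*A$3$2*A$4$4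
 + A$1$1*A$2$3*A$3$4*A$4$2 + A$1$1*A$2$4*A$3$2*A$4$3 - A$1$1*A$2$4*A$3$3*A$4$2
 - A$1$2*A$2$1*A$3$3*A$4$4 + A$1$2*A$2$1*A$3$4*A$4$3 + A$1$2*A$2$3*A$3$1*A$4$4
 - A$1$2*A$2$3*A$3$4*A$4$1 - A$1$2*A$2$4*A$3$1*A$4$3 + A$1$2*A$2$4*A$3$3*A$4$1
 + A$1$3*A$2$1*A$3$2*A$4$4 - A$1$3*A$2$1*A$3$4*A$4$2 - A$1$3*A$2$2*A$3$1*A$4$4
 + A$1$3*A$2$2*A$3$4*A$4$1 + A$1$3*A$2$4*A$3$1*A$4$2 - A$1$3*A$2$4*A$3$2*A$4$1
 - A$1$4*A$2$1*A$3$2*A$4$3 + A$1$4*A$2$1*A$3$3*A$4$2 + A$1$4*A$2$2*A$3$1*A$4$3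
 - A$1$4*A$2$2*A$3$3*A$4$1 - A$1$4*A$2$3*A$3$1*A$4$2 + A$1$4*A$2$3*A$3$2*A$4$1"
proof -
  have f1: "finite {2::4, 3, 4}" "1 \<notin> {2::4, 3, 4}" by auto
  have f2: "finite {3::4, 4}" "2 \<notin> {3::4, 4}" by auto
  have f3: "finite {4::4}" "3 \<notin> {4::4}" by auto
  show ?thesis
    unfolding det_def UNIV_4
    unfolding sum_over_permutations_insert[OF f1]
    unfolding sum_over_permutations_insert[OF f2]
    unfolding sum_over_permutations_insert[OF f3]
    unfolding permutes_sing
    by (simp add: sign_swap_id permutation_swap_id sign_compose permutation_compose swap_id_eq algebra_simps)
qed

definition Rb :: "real \<Rightarrow> real \<Rightarrow> real^4^4" where
  "Rb a b = (\<chi> i j. if i = 1 then (if j = 1 then cos a else if j = 2 then - sin a else 0)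
              else if i = 2 then (if j = 1 then sin a else if j = 2 then cos a else 0)
              else if i = 3 then (if j = 3 then cos b else if j = 4 then - sin b else 0)
              else (if j = 3 then sin b else if j = 4 then cos b else 0))"

definition U0 :: "real^4^4" where
  "U0 = (\<chi> i j. if i = 1 then (if j = 1 then 1 else 0)
              else if i = 2 then (if j = 4 then 1 else 0)
              else if i = 3 then (if j = 3 then 1 else 0)
              else (if j = 2 then -1 else 0))"

definition Mx :: "real \<Rightarrow> real \<Rightarrow> real \<Rightarrow> real \<Rightarrow> real^4^4" where
  "Mx a b c d = (\<chi> i j.
     if i = 1 then (if j = 1 then cos a * cos c else if j = 2 then - cos a * sin c
                    else if j = 3 then - sin a * sin d else - sin a * cos d)
     else if i = 2 then (if j = 1 then sin a * cos c else if j = 2 then - sin a * sin c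
                    else if j = 3 then cos a * sin d else cos a * cos d)
     else if i = 3 then (if j = 1 then sin b * sin c else if j = 2 then sin b * cos c
                    else if j = 3 then cos b * cos d else - cos b * sin d)
     else (if j = 1 then - cos b * sin c else if j = 2 then - cos b * cos c
                    else if j = 3 then sin b * cos d else - sin b * sin d))"

lemma Rb_mul: "Rb a b ** Rb c d = Rb (a + c) (b + d)"
  by (simp add: vec_eq_iff forall_4 matrix_matrix_mult_def sum_4 Rb_def cos_add sin_add)

lemma Rb_orth: "orthogonal_matrix (Rb a b)"
  unfolding orthogonal_matrix
  by (simp add: vec_eq_iff forall_4 matrix_matrix_mult_def sum_4 Rb_def transpose_def mat_def
      power2_eq_square[symmetric])

lemma Rb_det: "det (Rb a b) = 1"
proof -
  have e: "(cos a)^2 * (cos b)^2 + (cos a)^2*(sin b)^2 + (cos b)^2*(sin a)^2 + (sin a)^2*(sin b)^2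
     = ((cos a)^2 + (sin a)^2) * ((cos b)^2 + (sin b)^2)" by algebra
  have "(cos a)^2 * (cos b)^2 + (cos a)^2*(sin b)^2 + (cos b)^2*(sin a)^2 + (sin a)^2*(sin b)^2 = 1"
    unfolding e by simp
  then show ?thesis
    unfolding det_4 by (simp add: Rb_def power2_eq_square algebra_simps)
qed

lemma Rb_SO4: "Rb a b \<in> SO4" using Rb_orth Rb_det SO4_orth by blast

lemma U0_SO4: "U0 \<in> SO4"
  unfolding SO4_orth orthogonal_matrix det_4
  by (simp add: vec_eq_iff forall_4 matrix_matrix_mult_def sum_4 U0_def transpose_def mat_def)

lemma Mx_eq: "Rb a b ** U0 ** Rb c d = Mx a b c d"
  by (simp add: vec_eq_iff forall_4 matrix_matrix_mult_def sum_4 Rb_def U0_def Mx_def)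

lemma Mx_inner: "inner (Mx a b c d) (Mx a' b' c' d') =
   (cos (a - a') + cos (b - b')) * (cos (c - c') + cos (d - d'))"
  by (simp add: inner_vec_def sum_4 Mx_def cos_diff algebra_simps)




lemma matrix_sub_ldistrib': "(A::real^'n^'m) ** (B - C) = A ** B - A ** C"
  by (simp add: vec_eq_iff matrix_matrix_mult_def sum_subtractf algebra_simps)

lemma matrix_sub_rdistrib': "((B::real^'n^'m) - C) ** (A::real^'k^'n) = B ** A - C ** A"
  by (simp add: vec_eq_iff matrix_matrix_mult_def sum_subtractf algebra_simps)

lemma SO4_mul: "A \<in> SO4 \<Longrightarrow> B \<in> SO4 \<Longrightarrow> A ** B \<in> SO4"
  by (simp add: SO4_orth orthogonal_matrix_mul det_mul)

lemma SO4_transpose: "A \<in> SO4 \<Longrightarrow> transpose A \<in> SO4"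
  by (simp add: SO4_orth)

lemma SO4_tl: "A \<in> SO4 \<Longrightarrow> transpose A ** A = mat 1"
  by (simp add: SO4_def)

lemma SO4_tr: "A \<in> SO4 \<Longrightarrow> A ** transpose A = mat 1"
  by (simp add: SO4_orth orthogonal_matrix_def)

lemma iso_PQ:
  assumes P: "P \<in> SO4" and Q: "Q \<in> SO4"
  shows "SO4_isometry (\<lambda>U. P ** U ** Q)"
  unfolding SO4_isometry_def
proof
  show "bij_betw (\<lambda>U. P ** U ** Q) SO4 SO4"
  proof (rule bij_betw_byWitness[where f' = "\<lambda>V. transpose P ** V ** transpose Q"])
    have r1: "X ** Q ** transpose Q = X" for X :: "real^4^4"
      by (simp only: matrix_mul_assoc[symmetric] SO4_tr[OF Q] matrix_mul_rid)
    have r2: "X ** transpose Q ** Q = X" for X :: "real^4^4"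
      by (simp only: matrix_mul_assoc[symmetric] SO4_tl[OF Q] matrix_mul_rid)
    show "\<forall>a\<in>SO4. transpose P ** (P ** a ** Q) ** transpose Q = a"
      using SO4_tl[OF P] by (simp add: matrix_mul_assoc r1)
    show "\<forall>a'\<in>SO4. P ** (transpose P ** a' ** transpose Q) ** Q = a'"
      using SO4_tr[OF P] by (simp add: matrix_mul_assoc r2)
    show "(\<lambda>U. P ** U ** Q) ` SO4 \<subseteq> SO4" using P Q SO4_mul by auto
    show "(\<lambda>V. transpose P ** V ** transpose Q) ` SO4 \<subseteq> SO4" using P Q SO4_mul SO4_transpose by auto
  qed
  show "\<forall>x\<in>SO4. \<forall>y\<in>SO4. chordal_dist (P ** x ** Q) (P ** y ** Q) = chordal_dist x y"
  proof (intro ballI)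
    fix x y
    have "P ** x ** Q - P ** y ** Q = P ** (x - y) ** Q"
      by (simp add: matrix_sub_ldistrib' matrix_sub_rdistrib')
    then show "chordal_dist (P ** x ** Q) (P ** y ** Q) = chordal_dist x y"
      using P Q by (simp add: chordal_norm norm_mul_orth_left norm_mul_orth_right SO4_orth)
  qed
qed

definition th :: "nat \<Rightarrow> real" where "th k = real k * pi / 17"

definition Uc :: "nat \<Rightarrow> real^4^4" where
  "Uc k = Mx (-5 * th k) (15 * th k) (3 * th k) (-9 * th k)"

definition Pm :: "nat \<Rightarrow> real^4^4" where "Pm s = Rb (-5 * th s) (15 * th s)"
definition Qm :: "nat \<Rightarrow> real^4^4" where "Qm s = Rb (3 * th s) (-9 * th s)"

lemma Uc_eq: "Uc k = Pm k ** U0 ** Qm k"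
  by (simp add: Uc_def Pm_def Qm_def Mx_eq)

lemma Uc_SO4: "Uc k \<in> SO4"
  unfolding Uc_eq Pm_def Qm_def by (intro SO4_mul Rb_SO4 U0_SO4)

lemma Uc_shift: "Pm s ** Uc n ** Qm s = Uc (n + s)"
proof -
  have "Pm s ** Uc n ** Qm s = (Pm s ** Pm n) ** U0 ** (Qm n ** Qm s)"
    unfolding Uc_eq by (simp add: matrix_mul_assoc)
  also have "\<dots> = Pm (n + s) ** U0 ** Qm (n + s)"
    unfolding Pm_def Qm_def Rb_mul th_def by (simp add: algebra_simps add_divide_distrib)
  finally show ?thesis by (simp add: Uc_eq)
qed

lemma negmat_l: "mat (-1) ** (X::real^4^4) = - X"
  by (simp add: vec_eq_iff matrix_matrix_mult_def sum_4 mat_def forall_4)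

lemma negmat_r: "(X::real^4^4) ** mat (-1) = - X"
  by (simp add: vec_eq_iff matrix_matrix_mult_def sum_4 mat_def forall_4)

lemma th17: "th 17 = pi" by (simp add: th_def)

lemma Pm17: "Pm 17 = mat (-1)"
  unfolding Pm_def th17 by (simp add: Rb_def mat_def vec_eq_iff forall_4)

lemma Qm17: "Qm 17 = mat (-1)"
  unfolding Qm_def th17 by (simp add: Rb_def mat_def vec_eq_iff forall_4)

lemma Uc_per: "Uc (n + 17) = Uc n"
proof -
  have "Uc (n + 17) = Pm 17 ** Uc n ** Qm 17" using Uc_shift[of 17 n] by simp
  also have "\<dots> = Uc n" unfolding Pm17 Qm17 negmat_l negmat_r by simp
  finally show ?thesis .
qed

lemma Uc_mod: "Uc n = Uc (n mod 17)"
proof (induction n rule: less_induct)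
  case (less n)
  show ?case
  proof (cases "n < 17")
    case True then show ?thesis by simp
  next
    case False
    then have k: "n = (n - 17) + 17" by simp
    have "Uc n = Uc (n - 17)" using Uc_per[of "n - 17"] k by simp
    also have "\<dots> = Uc ((n - 17) mod 17)" by (rule less.IH) (use False in simp)
    also have "(n - 17) mod 17 = n mod 17" using False le_mod_geq[of 17 n] by simp
    finally show ?thesis .
  qed
qed

lemma Uc_inner_diff:
  assumes "j < 17" "k < 17" "j \<noteq> k"
  shows "inner (Uc j) (Uc k) = -1/4"
proof -
  define m where "m = int j - int k"
  have nd: "\<not> 17 dvd m" using assms unfolding m_def by presburger
  have e: "-5 * th j - -5 * th k = - (5 * (of_int m * pi / 17))"
    "15 * th j - 15 * th k = 15 * (of_int m * pi / 17)"
    "3 * th j - 3 * th k = 3 * (of_int m * pi / 17)"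
    "-9 * th j - -9 * th k = - (9 * (of_int m * pi / 17))"
    by (simp_all add: th_def m_def algebra_simps diff_divide_distrib)
  show ?thesis unfolding Uc_def Mx_inner e cos_minus using key_trig[OF nd] .
qed

lemma Uc_inner_same: "inner (Uc j) (Uc j) = 4"
  using SO4_norm[OF Uc_SO4[of j]] by (simp add: power2_norm_eq_inner[symmetric])

lemma Uc_dist:
  assumes "j < 17" "k < 17" "j \<noteq> k"
  shows "(norm (Uc j - Uc k))^2 = 17/2"
  using Uc_inner_diff[OF assms] Uc_inner_same[of j] Uc_inner_same[of k]
  by (simp add: power2_norm_eq_inner inner_diff_left inner_diff_right inner_commute)

definition Ccode :: "(real^4^4) set" where "Ccode = Uc ` {..<17}"

lemma Ccode_inj: "inj_on Uc {..<17}"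
proof (rule inj_onI)
  fix j k assume jk: "j \<in> {..<(17::nat)}" "k \<in> {..<(17::nat)}" "Uc j = Uc k"
  show "j = k"
  proof (rule ccontr)
    assume "j \<noteq> k"
    then have "inner (Uc j) (Uc k) = -1/4" using jk(1,2) Uc_inner_diff[of j k] by simp
    moreover have "inner (Uc j) (Uc k) = 4" using jk(3) Uc_inner_same by simp
    ultimately show False by simp
  qed
qed

lemma Ccode_card: "card Ccode = 17"
  unfolding Ccode_def using card_image[OF Ccode_inj] by simp

lemma Ccode_code: "is_code Ccode"
  unfolding is_code_def Ccode_def using Uc_SO4 by auto

lemma Ccode_dist: "x \<in> Ccode \<Longrightarrow> y \<in> Ccode \<Longrightarrow> x \<noteq> y \<Longrightarrow> (norm (x - y))^2 = 17/2"
  unfolding Ccode_def using Uc_dist by auto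

lemma Ccode_simplex: "regular_simplex Ccode"
  unfolding regular_simplex_def
proof (intro conjI exI ballI impI)
  show "is_code Ccode" by (rule Ccode_code)
  fix x y assume "x \<in> Ccode" "y \<in> Ccode" "x \<noteq> y"
  then have "(norm (x - y))^2 = 17/2" by (rule Ccode_dist)
  then show "chordal_dist x y = sqrt (17/2)" unfolding chordal_norm by (metis norm_ge_zero real_sqrt_unique)
qed

lemma Ccode_energy: "energy g Ccode = 272 * g (17/2)"
proof -
  have "energy g Ccode = (\<Sum>(x,y)\<in>offd Ccode. g (17/2))"
    unfolding energy_offd by (intro sum.cong refl) (auto simp: offd_def Ccode_dist)
  also have "\<dots> = 272 * g (17/2)"
    using card_offd[of Ccode] Ccode_card Ccode_code by (simp add: is_code_def)
  finally show ?thesis .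
qed

lemma Ccode_uo: "universally_optimal Ccode"
  unfolding universally_optimal_def
  using Ccode_code Ccode_energy Ccode_card energy_lower by auto

lemma Ccode_trans: "symmetry_transitive Ccode"
  unfolding symmetry_transitive_def
proof (intro ballI)
  fix x y assume "x \<in> Ccode" "y \<in> Ccode"
  then obtain j k where jk: "j < 17" "k < 17" "x = Uc j" "y = Uc k" unfolding Ccode_def by auto
  define s where "s = k + 17 - j"
  define f where "f = (\<lambda>U. Pm s ** U ** Qm s)"
  have iso: "SO4_isometry f" unfolding f_def Pm_def Qm_def by (intro iso_PQ Rb_SO4)
  have fU: "f (Uc n) = Uc ((n + s) mod 17)" for n
    unfolding f_def Uc_shift by (rule Uc_mod)
  have fx: "f x = y"
    using jk fU[of j] by (simp add: s_def)
  have sub: "f ` Ccode \<subseteq> Ccode" unfolding Ccode_def using fU by auto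
  have injf: "inj_on f Ccode"
  proof (rule inj_onI)
    fix u v assume uv: "u \<in> Ccode" "v \<in> Ccode" "f u = f v"
    have "chordal_dist (f u) (f v) = chordal_dist u v"
      using iso uv Ccode_code unfolding SO4_isometry_def is_code_def by blast
    then show "u = v" using uv by (simp add: chordal_norm)
  qed
  have "f ` Ccode = Ccode"
    using card_subset_eq[OF _ sub] Ccode_code card_image[OF injf] by (simp add: is_code_def)
  then show "\<exists>f. code_symmetry Ccode f \<and> f x = y"
    using iso fx unfolding code_symmetry_def by blast
qed

theorem theorem8p1:
  shows "(\<exists>C. is_code C \<and> card C = 17 \<and> regular_simplex C \<and> universally_optimal C
              \<and> symmetry_transitive C)
         \<and> (\<forall>C. regular_simplex C \<longrightarrow> card C \<le> 17)"
  using Ccode_code Ccode_card Ccode_simplex Ccode_uo Ccode_trans simplex_bound by blast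


end
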